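(* Let $l,t,s,x,n$ be integers with $n\geq 2s+1$, $t\geq l$ and $2\leq l\leq x\leq s$. Then $$ex(n,\{K_{l,t},M_{s+1}\},x)\leq (t-1)\binom{x}{l}+(l-1)n-\left\lceil\frac{x(l-1)}{2}\right\rceil+ex(2(s-x)+1,K_{l,t}).$$
   Context: All graphs are finite and simple. $ex(m,K_{l,t})$ is the maximum number of edges of an $m$-vertex graph with no copy of the complete bipartite graph $K_{l,t}$; $M_{s+1}$ is the matching of $s+1$ disjoint edges. For a graph $G$ with matching number at most $s$, say $X\subseteq V(G)$ is admissible if $|X|+\sum_{i=1}^m\lfloor |V(C_i)|/2\rfloor\leq s$, where $C_1,\dots,C_m$ are the components of $G-X$; let $x(G)$ be the maximum size of an admissible set. Let $\mathscr{G}_x$ be the set of graphs on $n$ vertices containing neither $K_{l,t}$ nor $M_{s+1}$ as a subgraph and with $x(G)=x$, and $ex(n,\{K_{l,t},M_{s+1}\},x)=\max_{G\in\mathscr{G}_x}e(G)$. *)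

theory Defs
  imports Complex_Main "HOL-Library.Disjoint_Sets"
begin

definition simple_graph :: "'a set \<Rightarrow> 'a set set \<Rightarrow> bool" where
  "simple_graph V E \<longleftrightarrow> finite V \<and> (\<forall>e\<in>E. e \<subseteq> V \<and> card e = 2)"

definition has_Klt :: "nat \<Rightarrow> nat \<Rightarrow> 'a set \<Rightarrow> 'a set set \<Rightarrow> bool" where
  "has_Klt l t V E \<longleftrightarrow> (\<exists>A B. A \<subseteq> V \<and> B \<subseteq> V \<and> A \<inter> B = {} \<and> card A = l \<and> card B = t
      \<and> (\<forall>a\<in>A. \<forall>b\<in>B. {a, b} \<in> E))"

definition has_matching :: "nat \<Rightarrow> 'a set set \<Rightarrow> bool" where
  "has_matching k E \<longleftrightarrow> (\<exists>M \<subseteq> E. card M = k \<and> disjoint M)"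

definition ex_Klt :: "nat \<Rightarrow> nat \<Rightarrow> nat \<Rightarrow> nat" where
  "ex_Klt m l t = Max {card E | E. simple_graph {0..<m} E \<and> \<not> has_Klt l t {0..<m} E}"

definition adj_outside :: "'a set \<Rightarrow> 'a set set \<Rightarrow> 'a set \<Rightarrow> ('a \<times> 'a) set" where
  "adj_outside V E X = {(u, v). {u, v} \<in> E \<and> u \<in> V - X \<and> v \<in> V - X}"

definition components_minus :: "'a set \<Rightarrow> 'a set set \<Rightarrow> 'a set \<Rightarrow> 'a set set" where
  "components_minus V E X = (\<lambda>v. {w. (v, w) \<in> (adj_outside V E X)\<^sup>*}) ` (V - X)"

definition admissible :: "nat \<Rightarrow> 'a set \<Rightarrow> 'a set set \<Rightarrow> 'a set \<Rightarrow> bool" where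
  "admissible s V E X \<longleftrightarrow> X \<subseteq> V \<and>
     card X + (\<Sum>C\<in>components_minus V E X. card C div 2) \<le> s"

definition x_param :: "nat \<Rightarrow> 'a set \<Rightarrow> 'a set set \<Rightarrow> nat" where
  "x_param s V E = Max {card X | X. admissible s V E X}"

end

theory Submission
  imports Defs
begin


definition imgE :: "('a \<Rightarrow> 'b) \<Rightarrow> 'a set set \<Rightarrow> 'b set set" where
  "imgE f F = (\<lambda>e. f ` e) ` F"

lemma has_Klt_restrict:
  assumes "has_Klt l t W' F" "\<forall>e\<in>F. e \<subseteq> W" "l \<ge> 1" "t \<ge> 1"
  shows "has_Klt l t W F"
proof -
  obtain A B where AB: "A \<subseteq> W'" "B \<subseteq> W'" "A \<inter> B = {}" "card A = l" "card B = t"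
     "\<forall>a\<in>A. \<forall>b\<in>B. {a, b} \<in> F" using assms(1) unfolding has_Klt_def by blast
  have "A \<noteq> {}" "B \<noteq> {}" using AB assms(3,4) by auto
  have "A \<subseteq> W"
  proof
    fix a assume "a \<in> A"
    obtain b where "b \<in> B" using \<open>B \<noteq> {}\<close> by blast
    then have "{a,b} \<in> F" using AB \<open>a \<in> A\<close> by blast
    then show "a \<in> W" using assms(2) by blast
  qed
  moreover have "B \<subseteq> W"
  proof
    fix b assume "b \<in> B"
    obtain a where "a \<in> A" using \<open>A \<noteq> {}\<close> by blast
    then have "{a,b} \<in> F" using AB \<open>b \<in> B\<close> by blast
    then show "b \<in> W" using assms(2) by blast
  qed
  ultimately show ?thesis using AB unfolding has_Klt_def by blast
qed

lemma has_Klt_mono: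
  assumes "has_Klt l t W F" "W \<subseteq> W'" "F \<subseteq> F'"
  shows "has_Klt l t W' F'"
proof -
  obtain A B where AB: "A \<subseteq> W" "B \<subseteq> W" "A \<inter> B = {}" "card A = l" "card B = t"
     "\<forall>a\<in>A. \<forall>b\<in>B. {a, b} \<in> F" using assms(1) unfolding has_Klt_def by blast
  then have "A \<subseteq> W'" "B \<subseteq> W'" "\<forall>a\<in>A. \<forall>b\<in>B. {a, b} \<in> F'" using assms(2,3) by auto
  then show ?thesis using AB unfolding has_Klt_def by blast
qed

lemma has_Klt_transport:
  assumes "inj_on f W" "\<forall>e\<in>F. e \<subseteq> W" "has_Klt l t (f ` W) (imgE f F)"
  shows "has_Klt l t W F"
proof -
  obtain A B where AB: "A \<subseteq> f ` W" "B \<subseteq> f ` W" "A \<inter> B = {}" "card A = l" "card B = t"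
     "\<forall>a\<in>A. \<forall>b\<in>B. {a, b} \<in> imgE f F" using assms(3) unfolding has_Klt_def by blast
  let ?g = "inv_into W f"
  have injg: "inj_on ?g (f ` W)" by (rule inj_on_inv_into) simp
  have "?g ` A \<subseteq> W" "?g ` B \<subseteq> W" using AB(1,2) by (auto intro: inv_into_into)
  moreover have "?g ` A \<inter> ?g ` B = {}"
    using AB(1,2,3) by (auto simp: f_inv_into_f) (metis disjoint_iff f_inv_into_f subsetD)
  moreover have "card (?g ` A) = l" "card (?g ` B) = t"
    using AB injg by (metis card_image inj_on_subset)+
  moreover have "\<forall>a\<in>?g ` A. \<forall>b\<in>?g ` B. {a, b} \<in> F"
  proof (intro ballI)
    fix a b assume a: "a \<in> ?g ` A" and b: "b \<in> ?g ` B"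
    then obtain a' b' where a': "a' \<in> A" "a = ?g a'" and b': "b' \<in> B" "b = ?g b'" by blast
    have fa: "f a = a'" "f b = b'" using a' b' AB(1,2) by (auto simp: f_inv_into_f)
    have "{a', b'} \<in> imgE f F" using AB(6) a' b' by blast
    then obtain e where e: "e \<in> F" "f ` e = {a', b'}" unfolding imgE_def by auto
    have "a \<in> W" "b \<in> W" using a b \<open>?g ` A \<subseteq> W\<close> \<open>?g ` B \<subseteq> W\<close> by auto
    then have "f ` e = f ` {a, b}" using e fa by auto
    moreover have "e \<subseteq> W" "{a,b} \<subseteq> W" using assms(2) e(1) \<open>a \<in> W\<close> \<open>b \<in> W\<close> by auto
    ultimately have "e = {a, b}" using inj_on_image_eq_iff[OF assms(1)] by blast
    then show "{a, b} \<in> F" using e by simp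
  qed
  ultimately show ?thesis unfolding has_Klt_def by blast
qed

lemma ex_set_finite: "finite {card E | E. simple_graph {0..<(m::nat)} E \<and> \<not> has_Klt l t {0..<m} E}"
proof -
  have "{card E | E. simple_graph {0..<m} E \<and> \<not> has_Klt l t {0..<m} E}
        \<subseteq> card ` Pow (Pow {0..<m::nat})"
    unfolding simple_graph_def by auto
  then show ?thesis by (rule finite_subset) simp
qed

lemma ex_bound:
  assumes "simple_graph W F" "\<not> has_Klt l t W F" "card W \<le> m" "l \<ge> 1" "t \<ge> 1"
  shows "card F \<le> ex_Klt m l t"
proof -
  have finW: "finite W" using assms(1) unfolding simple_graph_def by blast
  obtain f where f: "bij_betw f W {0..<card W}" using ex_bij_betw_finite_nat[OF finW] by blast
  have inj: "inj_on f W" and fW: "f ` W = {0..<card W}" using f unfolding bij_betw_def by auto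
  have sub: "\<forall>e\<in>F. e \<subseteq> W" using assms(1) unfolding simple_graph_def by blast
  have sg: "simple_graph {0..<m} (imgE f F)"
    unfolding simple_graph_def imgE_def
  proof (intro conjI ballI)
    fix e' assume "e' \<in> (\<lambda>e. f ` e) ` F"
    then obtain e where e: "e \<in> F" "e' = f ` e" by blast
    have "e \<subseteq> W" "card e = 2" using e assms(1) unfolding simple_graph_def by auto
    then have "e' \<subseteq> {0..<card W}" using e fW by auto
    then show "e' \<subseteq> {0..<m}" using assms(3) by auto
    show "card e' = 2" using e \<open>e \<subseteq> W\<close> \<open>card e = 2\<close> inj
      by (metis card_image inj_on_subset)
  qed simp
  have nk: "\<not> has_Klt l t {0..<m} (imgE f F)"
  proof
    assume "has_Klt l t {0..<m} (imgE f F)"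
    moreover have "\<forall>e\<in>imgE f F. e \<subseteq> f ` W" using sub unfolding imgE_def by auto
    ultimately have "has_Klt l t (f ` W) (imgE f F)" using has_Klt_restrict assms by blast
    then have "has_Klt l t W F" using has_Klt_transport inj sub by blast
    then show False using assms(2) by blast
  qed
  have "card (imgE f F) = card F"
    unfolding imgE_def
  proof (rule card_image, rule inj_onI)
    fix e1 e2 assume "e1 \<in> F" "e2 \<in> F" "f ` e1 = f ` e2"
    then show "e1 = e2" using inj_on_image_eq_iff[OF inj] sub by blast
  qed
  moreover have "card (imgE f F) \<le> ex_Klt m l t"
    unfolding ex_Klt_def using sg nk by (intro Max_ge[OF ex_set_finite]) blast
  ultimately show ?thesis by simp
qed

lemma ex_attained:
  assumes "l \<ge> 1" "t \<ge> 1"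
  shows "\<exists>F. simple_graph {0..<m} F \<and> \<not> has_Klt l t {0..<m} F \<and> card F = ex_Klt m l t"
proof -
  have "simple_graph {0..<m} {}" unfolding simple_graph_def by simp
  moreover have "\<not> has_Klt l t {0..<m} {}"
    unfolding has_Klt_def using assms by (auto simp: card_gt_0_iff)
  ultimately have ne: "{card E | E. simple_graph {0..<m} E \<and> \<not> has_Klt l t {0..<m} E} \<noteq> {}"
    by blast
  show ?thesis using Max_in[OF ex_set_finite ne] unfolding ex_Klt_def by auto
qed

lemma ex_mono:
  assumes "m \<le> m'" "l \<ge> 1" "t \<ge> 1"
  shows "ex_Klt m l t \<le> ex_Klt m' l t"
proof -
  obtain F where "simple_graph {0..<m} F" "\<not> has_Klt l t {0..<m} F" "card F = ex_Klt m l t"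
    using ex_attained[OF assms(2,3), of m] by blast
  then show ?thesis using ex_bound[of "{0..<m}" F l t m'] assms by auto
qed



lemma card_ge2_other:
  assumes "card B \<ge> 2" shows "\<exists>b\<in>B. b \<noteq> c"
proof (rule ccontr)
  assume "\<not> ?thesis"
  then have "B \<subseteq> {c}" by blast
  then have "card B \<le> 1" using card_mono[of "{c}" B] by simp
  then show False using assms by simp
qed

lemma glue_side:
  assumes "W1 \<inter> W2 \<subseteq> {c}" "\<forall>e\<in>F1. e \<subseteq> W1" "\<forall>e\<in>F2. e \<subseteq> W2"
    "card B \<ge> 2" "\<forall>a\<in>A. \<forall>b\<in>B. {a,b} \<in> F1 \<union> F2"
    "a1 \<in> A" "a1 \<in> W1" "a1 \<noteq> c"
  shows "A \<union> B \<subseteq> W1"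
proof -
  have a1: "a1 \<notin> W2" using assms(1,7,8) by blast
  have BW: "B \<subseteq> W1"
  proof
    fix b assume "b \<in> B"
    then have "{a1,b} \<in> F1 \<union> F2" using assms(5,6) by blast
    then show "b \<in> W1" using assms(2,3) a1 by blast
  qed
  obtain b1 where b1: "b1 \<in> B" "b1 \<noteq> c" using card_ge2_other[OF assms(4)] by blast
  have b1': "b1 \<notin> W2" using b1 BW assms(1) by blast
  have "A \<subseteq> W1"
  proof
    fix a assume "a \<in> A"
    then have "{a,b1} \<in> F1 \<union> F2" using assms(5) b1 by blast
    then show "a \<in> W1" using assms(2,3) b1' by blast
  qed
  then show ?thesis using BW by blast
qed

lemma glue:
  assumes "W1 \<inter> W2 \<subseteq> {c}" "\<forall>e\<in>F1. e \<subseteq> W1" "\<forall>e\<in>F2. e \<subseteq> W2"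
    "\<not> has_Klt l t W1 F1" "\<not> has_Klt l t W2 F2" "l \<ge> 2" "t \<ge> 2"
  shows "\<not> has_Klt l t (W1 \<union> W2) (F1 \<union> F2)"
proof
  assume "has_Klt l t (W1 \<union> W2) (F1 \<union> F2)"
  then obtain A B where AB: "A \<subseteq> W1 \<union> W2" "B \<subseteq> W1 \<union> W2" "A \<inter> B = {}" "card A = l" "card B = t"
     "\<forall>a\<in>A. \<forall>b\<in>B. {a, b} \<in> F1 \<union> F2" unfolding has_Klt_def by blast
  obtain a1 where a1: "a1 \<in> A" "a1 \<noteq> c" using card_ge2_other[of A c] AB assms by auto
  have key: "\<And>W1 W2 F1 F2. W1 \<inter> W2 \<subseteq> {c} \<Longrightarrow> \<forall>e\<in>F1. e \<subseteq> W1 \<Longrightarrow> \<forall>e\<in>F2. e \<subseteq> W2 \<Longrightarrow>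
     \<not> has_Klt l t W1 F1 \<Longrightarrow> \<forall>a\<in>A. \<forall>b\<in>B. {a, b} \<in> F1 \<union> F2 \<Longrightarrow> a1 \<in> W1 \<Longrightarrow> False"
  proof -
    fix W1 W2 F1 F2
    assume h: "W1 \<inter> W2 \<subseteq> {c}" "\<forall>e\<in>F1. e \<subseteq> W1" "\<forall>e\<in>F2. e \<subseteq> W2"
      "\<not> has_Klt l t W1 F1" "\<forall>a\<in>A. \<forall>b\<in>B. {a, b} \<in> F1 \<union> F2" "a1 \<in> W1"
    have sub: "A \<union> B \<subseteq> W1" using glue_side[OF h(1,2,3) _ h(5) a1(1) h(6) a1(2)] AB assms by auto
    have "\<forall>a\<in>A. \<forall>b\<in>B. {a, b} \<in> F1"
    proof (intro ballI)
      fix a b assume ab: "a \<in> A" "b \<in> B"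
      have "a \<noteq> b" using ab AB(3) by blast
      show "{a,b} \<in> F1"
      proof (rule ccontr)
        assume "{a,b} \<notin> F1"
        then have "{a,b} \<in> F2" using h(5) ab by blast
        then have "{a,b} \<subseteq> W1 \<inter> W2" using h(3) sub ab by blast
        then show False using h(1) \<open>a \<noteq> b\<close> by blast
      qed
    qed
    moreover have "A \<subseteq> W1" "B \<subseteq> W1" using sub by auto
    ultimately have "has_Klt l t W1 F1" using AB(3,4,5) unfolding has_Klt_def by blast
    then show False using h(4) by blast
  qed
  show False
  proof (cases "a1 \<in> W1")
    case True
    then show False using key[OF assms(1,2,3,4) AB(6)] by blast
  next
    case False
    then have "a1 \<in> W2" using a1 AB by blast
    moreover have "W2 \<inter> W1 \<subseteq> {c}" using assms(1) by blast
    moreover have "\<forall>a\<in>A. \<forall>b\<in>B. {a, b} \<in> F2 \<union> F1" using AB(6) by blast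
    ultimately show False using key[OF _ assms(3,2,5)] by blast
  qed
qed

lemma imgE_card:
  assumes "inj_on f W" "\<forall>e\<in>F. e \<subseteq> W"
  shows "card (imgE f F) = card F"
  unfolding imgE_def
proof (rule card_image, rule inj_onI)
  fix e1 e2 assume "e1 \<in> F" "e2 \<in> F" "f ` e1 = f ` e2"
  then show "e1 = e2" using inj_on_image_eq_iff[OF assms(1)] assms(2) by blast
qed

lemma imgE_simple:
  assumes "inj_on f W" "simple_graph W F"
  shows "simple_graph (f ` W) (imgE f F)"
  unfolding simple_graph_def imgE_def
proof (intro conjI ballI)
  show "finite (f ` W)" using assms(2) unfolding simple_graph_def by simp
  fix e' assume "e' \<in> (\<lambda>e. f ` e) ` F"
  then obtain e where e: "e \<in> F" "e' = f ` e" by blast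
  have "e \<subseteq> W" "card e = 2" using e assms(2) unfolding simple_graph_def by auto
  then show "e' \<subseteq> f ` W" using e by auto
  show "card e' = 2" using e \<open>e \<subseteq> W\<close> \<open>card e = 2\<close> assms(1)
    by (metis card_image inj_on_subset)
qed

lemma ex_glue:
  assumes "l \<ge> 2" "t \<ge> 2"
  shows "ex_Klt (p+1) l t + ex_Klt (q+1) l t \<le> ex_Klt (p+q+1) l t"
proof -
  have l1: "l \<ge> 1" "t \<ge> 1" using assms by auto
  obtain F1 where F1: "simple_graph {0..<p+1} F1" "\<not> has_Klt l t {0..<p+1} F1" "card F1 = ex_Klt (p+1) l t"
    using ex_attained[OF l1] by blast
  obtain F2 where F2: "simple_graph {0..<q+1} F2" "\<not> has_Klt l t {0..<q+1} F2" "card F2 = ex_Klt (q+1) l t"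
    using ex_attained[OF l1] by blast
  define f where "f = (\<lambda>v::nat. v + p)"
  have inj: "inj_on f {0..<q+1}" unfolding f_def by (auto intro: inj_onI)
  have fW: "f ` {0..<q+1} = {p..<p+q+1}" unfolding f_def
    by (auto simp: image_iff)
  let ?F2 = "imgE f F2"
  have sub2: "\<forall>e\<in>F2. e \<subseteq> {0..<q+1}" using F2(1) unfolding simple_graph_def by blast
  have sg2: "simple_graph {p..<p+q+1} ?F2" using imgE_simple[OF inj F2(1)] fW by simp
  have nk2: "\<not> has_Klt l t {p..<p+q+1} ?F2" using has_Klt_transport[OF inj sub2] F2(2) fW by auto
  have c2: "card ?F2 = card F2" using imgE_card[OF inj sub2] .
  have int: "{0..<p+1} \<inter> {p..<p+q+1} \<subseteq> {p}" by auto
  have s1: "\<forall>e\<in>F1. e \<subseteq> {0..<p+1}" "\<forall>e\<in>F1. card e = 2" using F1(1) unfolding simple_graph_def by auto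
  have s2: "\<forall>e\<in>?F2. e \<subseteq> {p..<p+q+1}" "\<forall>e\<in>?F2. card e = 2" using sg2 unfolding simple_graph_def by auto
  have nk: "\<not> has_Klt l t ({0..<p+1} \<union> {p..<p+q+1}) (F1 \<union> ?F2)"
    using glue[OF int s1(1) s2(1) F1(2) nk2 assms] .
  have un: "{0..<p+1} \<union> {p..<p+q+1} = {0..<p+q+1}" by auto
  have disj: "F1 \<inter> ?F2 = {}"
  proof (rule ccontr)
    assume "F1 \<inter> ?F2 \<noteq> {}"
    then obtain e where "e \<in> F1" "e \<in> ?F2" by blast
    then have "e \<subseteq> {p}" "card e = 2" using s1 s2 int by blast+
    then show False using card_mono[of "{p}" e] by simp
  qed
  have fin: "finite F1" "finite ?F2" using s1(1) s2(1)
    by (meson Pow_iff finite_Pow_iff finite_atLeastLessThan finite_subset subsetI)+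
  have sg: "simple_graph {0..<p+q+1} (F1 \<union> ?F2)" unfolding simple_graph_def
  proof (intro conjI ballI)
    fix e assume "e \<in> F1 \<union> ?F2"
    then show "e \<subseteq> {0..<p+q+1}" "card e = 2" using s1 s2 un by blast+
  qed simp
  have "card (F1 \<union> ?F2) \<le> ex_Klt (p+q+1) l t"
    using ex_bound[OF sg _ _ l1] nk un by simp
  moreover have "card (F1 \<union> ?F2) = card F1 + card F2" using card_Un_disjoint[OF fin disj] c2 by simp
  ultimately show ?thesis using F1(3) F2(3) by simp
qed

lemma ex_sum:
  assumes "finite I" "l \<ge> 2" "t \<ge> 2"
  shows "(\<Sum>i\<in>I. ex_Klt (2 * k i + 1) l t) \<le> ex_Klt (2 * (\<Sum>i\<in>I. k i) + 1) l t"
  using assms(1)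
proof (induction I rule: finite_induct)
  case empty
  then show ?case by simp
next
  case (insert i I)
  have "(\<Sum>i\<in>insert i I. ex_Klt (2 * k i + 1) l t) = ex_Klt (2 * k i + 1) l t + (\<Sum>i\<in>I. ex_Klt (2 * k i + 1) l t)"
    using insert by simp
  also have "\<dots> \<le> ex_Klt (2 * k i + 1) l t + ex_Klt (2 * (\<Sum>i\<in>I. k i) + 1) l t" using insert by simp
  also have "\<dots> \<le> ex_Klt (2 * k i + 2 * (\<Sum>i\<in>I. k i) + 1) l t" using ex_glue[OF assms(2,3)] by simp
  also have "\<dots> = ex_Klt (2 * (\<Sum>i\<in>insert i I. k i) + 1) l t" using insert by (simp add: algebra_simps)
  finally show ?case .
qed



lemma card2_obtain:
  assumes "card e = 2" "z \<in> e" shows "\<exists>y. e = {z, y} \<and> y \<noteq> z"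
proof -
  from card_2_iff[THEN iffD1, OF assms(1)] obtain a b where "e = {a,b}" "a \<noteq> b" by blast
  then show ?thesis using assms(2) by auto
qed

lemma adj_sym: "sym (adj_outside V E X)"
  unfolding adj_outside_def sym_def by (auto simp: insert_commute)

lemma adj_in: "(a,b) \<in> adj_outside V E X \<Longrightarrow> a \<in> V - X \<and> b \<in> V - X \<and> {a,b} \<in> E"
  unfolding adj_outside_def by auto

lemma rtr_in: "(a,b) \<in> (adj_outside V E X)\<^sup>* \<Longrightarrow> a \<in> V - X \<Longrightarrow> b \<in> V - X"
  by (induction rule: rtrancl_induct) (auto dest: adj_in)

lemma comp_sub: "C \<in> components_minus V E X \<Longrightarrow> C \<subseteq> V - X"
proof
  fix w assume "C \<in> components_minus V E X" "w \<in> C"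
  then obtain v where "v \<in> V - X" "(v, w) \<in> (adj_outside V E X)\<^sup>*"
    unfolding components_minus_def by blast
  then show "w \<in> V - X" using rtr_in by metis
qed

lemma rtr_sym: "(a,b) \<in> (adj_outside V E X)\<^sup>* \<Longrightarrow> (b,a) \<in> (adj_outside V E X)\<^sup>*"
  using sym_rtrancl[OF adj_sym, of V E X] unfolding sym_def by blast

lemma comp_conn:
  assumes "C \<in> components_minus V E X" "u \<in> C" "v \<in> C"
  shows "(u,v) \<in> (adj_outside V E X)\<^sup>*"
proof -
  obtain c where "C = {w. (c, w) \<in> (adj_outside V E X)\<^sup>*}"
    using assms(1) unfolding components_minus_def by blast
  then have "(c,u) \<in> (adj_outside V E X)\<^sup>*" "(c,v) \<in> (adj_outside V E X)\<^sup>*" using assms by auto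
  then show ?thesis using rtr_sym rtrancl_trans by metis
qed

lemma comp_eq:
  assumes "C1 \<in> components_minus V E X" "C2 \<in> components_minus V E X" "w \<in> C1" "w \<in> C2"
  shows "C1 = C2"
proof -
  obtain c1 where c1: "C1 = {y. (c1, y) \<in> (adj_outside V E X)\<^sup>*}"
    using assms(1) unfolding components_minus_def by blast
  obtain c2 where c2: "C2 = {y. (c2, y) \<in> (adj_outside V E X)\<^sup>*}"
    using assms(2) unfolding components_minus_def by blast
  have h: "(c1,w) \<in> (adj_outside V E X)\<^sup>*" "(c2,w) \<in> (adj_outside V E X)\<^sup>*" using assms c1 c2 by auto
  have "(c1,c2) \<in> (adj_outside V E X)\<^sup>*" using h rtr_sym rtrancl_trans by metis
  moreover have "(c2,c1) \<in> (adj_outside V E X)\<^sup>*" using h rtr_sym rtrancl_trans by metis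
  ultimately have "\<And>y. (c1,y) \<in> (adj_outside V E X)\<^sup>* \<longleftrightarrow> (c2,y) \<in> (adj_outside V E X)\<^sup>*"
    by (meson rtrancl_trans)
  then show ?thesis unfolding c1 c2 by simp
qed

lemma edge_comp:
  assumes "e \<in> E" "e \<subseteq> V" "e \<inter> X = {}" "card e = 2"
  shows "\<exists>C\<in>components_minus V E X. e \<subseteq> C"
proof -
  from card_2_iff[THEN iffD1, OF assms(4)] obtain p q where pq: "e = {p,q}" "p \<noteq> q" by blast
  have pV: "p \<in> V - X" using pq assms by auto
  have "(p,q) \<in> adj_outside V E X" using pq assms unfolding adj_outside_def by auto
  then have "e \<subseteq> {w. (p, w) \<in> (adj_outside V E X)\<^sup>*}" using pq by auto
  moreover have "{w. (p, w) \<in> (adj_outside V E X)\<^sup>*} \<in> components_minus V E X"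
    unfolding components_minus_def using pV by blast
  ultimately show ?thesis by blast
qed

lemma comps_finite: "finite V \<Longrightarrow> finite (components_minus V E X)"
  unfolding components_minus_def by simp

lemma comps_card_sum:
  assumes "simple_graph V E" "F \<subseteq> E"
  shows "card {e\<in>F. e \<inter> X = {}} = (\<Sum>C\<in>components_minus V E X. card {e\<in>F. e \<subseteq> C})"
proof -
  have finV: "finite V" using assms(1) unfolding simple_graph_def by blast
  have finE: "finite E" using assms(1) unfolding simple_graph_def
    by (meson Pow_iff finite_Pow_iff finite_subset subsetI)
  have eq: "{e\<in>F. e \<inter> X = {}} = (\<Union>C\<in>components_minus V E X. {e\<in>F. e \<subseteq> C})"
  proof
    show "{e\<in>F. e \<inter> X = {}} \<subseteq> (\<Union>C\<in>components_minus V E X. {e\<in>F. e \<subseteq> C})"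
    proof
      fix e assume e: "e \<in> {e\<in>F. e \<inter> X = {}}"
      then have "e \<in> E" "e \<subseteq> V" "card e = 2" using assms unfolding simple_graph_def by auto
      then show "e \<in> (\<Union>C\<in>components_minus V E X. {e\<in>F. e \<subseteq> C})"
        using edge_comp[of e E V X] e by blast
    qed
  next
    show "(\<Union>C\<in>components_minus V E X. {e\<in>F. e \<subseteq> C}) \<subseteq> {e\<in>F. e \<inter> X = {}}"
      using comp_sub by blast
  qed
  have "card (\<Union>C\<in>components_minus V E X. {e\<in>F. e \<subseteq> C}) = (\<Sum>C\<in>components_minus V E X. card {e\<in>F. e \<subseteq> C})"
  proof (rule card_UN_disjoint)
    show "finite (components_minus V E X)" using comps_finite[OF finV] .
    show "\<forall>C\<in>components_minus V E X. finite {e \<in> F. e \<subseteq> C}" using finE assms(2)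
      by (metis (no_types, lifting) finite_subset mem_Collect_eq subsetI)
    show "\<forall>C1\<in>components_minus V E X. \<forall>C2\<in>components_minus V E X. C1 \<noteq> C2 \<longrightarrow>
          {e \<in> F. e \<subseteq> C1} \<inter> {e \<in> F. e \<subseteq> C2} = {}"
    proof (intro ballI impI)
      fix C1 C2 assume C: "C1 \<in> components_minus V E X" "C2 \<in> components_minus V E X" "C1 \<noteq> C2"
      show "{e \<in> F. e \<subseteq> C1} \<inter> {e \<in> F. e \<subseteq> C2} = {}"
      proof (rule ccontr)
        assume "{e \<in> F. e \<subseteq> C1} \<inter> {e \<in> F. e \<subseteq> C2} \<noteq> {}"
        then obtain e where e: "e \<in> F" "e \<subseteq> C1" "e \<subseteq> C2" by blast
        then have "card e = 2" using assms unfolding simple_graph_def by auto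
        then obtain w where "w \<in> e" by fastforce
        then show False using comp_eq[OF C(1,2)] e C(3) by blast
      qed
    qed
  qed
  then show ?thesis using eq by simp
qed

definition matching :: "'a set set \<Rightarrow> 'a set set \<Rightarrow> bool" where
  "matching E M \<longleftrightarrow> M \<subseteq> E \<and> disjoint M"

definition maxm :: "'a set set \<Rightarrow> 'a set set \<Rightarrow> bool" where
  "maxm E M \<longleftrightarrow> matching E M \<and> (\<forall>M'. matching E M' \<longrightarrow> card M' \<le> card M)"

lemma simple_finE: "simple_graph V E \<Longrightarrow> finite E"
  unfolding simple_graph_def by (meson Pow_iff finite_Pow_iff finite_subset subsetI)

lemma ex_max_nat:
  fixes f :: "'b \<Rightarrow> nat"
  assumes "finite S" "S \<noteq> {}" shows "\<exists>x\<in>S. \<forall>y\<in>S. f y \<le> f x"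
proof -
  have "Max (f ` S) \<in> f ` S" using assms by simp
  then obtain x where x: "x \<in> S" "f x = Max (f ` S)" by auto
  have "\<forall>y\<in>S. f y \<le> f x"
  proof
    fix y assume "y \<in> S"
    then have "f y \<in> f ` S" by blast
    then show "f y \<le> f x" using Max_ge[of "f ` S" "f y"] assms(1) x(2) by simp
  qed
  then show ?thesis using x(1) by blast
qed

lemma maxm_exists:
  assumes "finite E" shows "\<exists>M. maxm E M"
proof -
  have "finite {M. matching E M}" using assms unfolding matching_def
    by (metis (no_types, lifting) Collect_mono Pow_def finite_Pow_iff finite_subset)
  moreover have "{} \<in> {M. matching E M}" unfolding matching_def by simp
  ultimately obtain M where "M \<in> {M. matching E M}" "\<forall>M'\<in>{M. matching E M}. card M' \<le> card M"
    using ex_max_nat[of "{M. matching E M}" card] by blast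
  then show ?thesis unfolding maxm_def by blast
qed

lemma matching_card_Union:
  assumes "simple_graph V E" "matching E M"
  shows "card (\<Union>M) = 2 * card M" "\<Union>M \<subseteq> V" "finite M"
proof -
  have fM: "finite M" using simple_finE[OF assms(1)] assms(2) unfolding matching_def
    by (meson finite_subset)
  have "card (\<Union>M) = sum card M"
    using assms(2) unfolding matching_def
  proof (intro card_Union_disjoint)
    fix A assume "A \<in> M"
    then have "A \<subseteq> V" "finite V" using assms unfolding matching_def simple_graph_def by auto
    then show "finite A" using finite_subset by blast
  qed blast
  also have "\<dots> = sum (\<lambda>_. 2) M" using assms unfolding matching_def simple_graph_def
    by (intro sum.cong) auto
  finally show "card (\<Union>M) = 2 * card M" by simp
  show "\<Union>M \<subseteq> V" using assms unfolding matching_def simple_graph_def by auto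
  show "finite M" using fM .
qed

lemma maxm_insert:
  assumes "simple_graph V E" "maxm E M" "e \<in> E" "e \<inter> \<Union>M = {}"
  shows False
proof -
  have "card e = 2" using assms unfolding simple_graph_def by auto
  then have "e \<noteq> {}" by auto
  then have eM: "e \<notin> M" using assms(4) by blast
  have fM: "finite M" using matching_card_Union[OF assms(1)] assms(2) unfolding maxm_def by blast
  have "matching E (insert e M)" using assms unfolding maxm_def matching_def
    by (auto simp: pairwise_insert disjnt_def)
  then have "card (insert e M) \<le> card M" using assms(2) unfolding maxm_def by blast
  then show False using eM fM by simp
qed



lemma no_two_unmatched:
  assumes sg: "simple_graph V E" and caseB: "\<forall>w\<in>V. \<exists>N. maxm E N \<and> w \<notin> \<Union>N"
  shows "\<forall>M u v. maxm E M \<longrightarrow> (u,v) \<in> (adj_outside V E {}) ^^ k \<longrightarrow> u \<noteq> v \<longrightarrow> u \<notin> \<Union>M \<longrightarrow> v \<notin> \<Union>M \<longrightarrow> False"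
proof (induction k rule: less_induct)
  case (less k)
  let ?R = "adj_outside V E {}"
  show ?case
  proof (intro allI impI)
    fix M u v
    assume M: "maxm E M" and uv: "(u,v) \<in> ?R ^^ k" "u \<noteq> v" "u \<notin> \<Union>M" "v \<notin> \<Union>M"
    consider "k = 0" | "k = 1" | k' where "k = Suc k'" "k' \<ge> 1" 
    proof -
      assume h0: "k = 0 \<Longrightarrow> thesis" and h1: "k = 1 \<Longrightarrow> thesis"
        and h2: "\<And>k'. k = Suc k' \<Longrightarrow> k' \<ge> 1 \<Longrightarrow> thesis"
      show thesis
      proof (cases "k \<ge> 2")
        case True
        then show thesis using h2[of "k - 1"] by simp
      next
        case False
        then have "k = 0 \<or> k = 1" by linarith
        then show thesis using h0 h1 by blast
      qed
    qed
    then show False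
    proof cases
      case 1
      then show False using uv by simp
    next
      case 2
      then have "(u,v) \<in> ?R" using uv by simp
      then have "{u,v} \<in> E" using adj_in[of u v V E "{}"] by blast
      then show False using maxm_insert[OF sg M] uv by blast
    next
      case 3
      then have "(u,v) \<in> ?R ^^ Suc k'" using uv(1) by simp
      then obtain w where w: "(u,w) \<in> ?R" "(w,v) \<in> ?R ^^ k'" using relpow_Suc_D2[of u v k' ?R] by blast
      have R1: "(u,w) \<in> ?R ^^ 1" using w by simp
      have wV: "w \<in> V" using adj_in[of u w V E "{}"] w(1) by blast
      have uV: "u \<in> V" using adj_in[of u w V E "{}"] w(1) by blast
      have vV: "v \<in> V" using rtr_in[of w v V E "{}"] relpow_imp_rtrancl[OF w(2)] wV by blast
      have lt1: "1 < k" and ltk: "k' < k" using 3 by auto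
      note IH1 = less.IH[OF lt1] and IHk = less.IH[OF ltk]
      have "w \<noteq> v"
      proof
        assume "w = v"
        then have "(u,v) \<in> ?R ^^ 1" using R1 by simp
        then show False using IH1 M uv(2,3,4) by blast
      qed
      have "w \<noteq> u"
      proof
        assume "w = u"
        then have "(u,v) \<in> ?R ^^ k'" using w(2) by simp
        then show False using IHk M uv(2,3,4) by blast
      qed
      have wM: "w \<in> \<Union>M"
      proof (rule ccontr)
        assume "w \<notin> \<Union>M"
        then show False using IH1 M R1 uv(3) \<open>w \<noteq> u\<close> by blast
      qed
      define S where "S = {N. maxm E N \<and> w \<notin> \<Union>N}"
      have "S \<subseteq> Pow E" unfolding S_def maxm_def matching_def by blast
      then have finS: "finite S" using simple_finE[OF sg] finite_subset by blast
      have "S \<noteq> {}" using caseB wV unfolding S_def by blast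
      then obtain N where NS: "N \<in> S" and Nmax: "\<forall>N'\<in>S. card (M \<inter> N') \<le> card (M \<inter> N)"
        using ex_max_nat[OF finS, of "\<lambda>N. card (M \<inter> N)"] by blast
      have N: "maxm E N" "w \<notin> \<Union>N" using NS unfolding S_def by auto
      have uN: "u \<in> \<Union>N"
      proof (rule ccontr)
        assume "u \<notin> \<Union>N"
        then show False using IH1 N R1 \<open>w \<noteq> u\<close> by blast
      qed
      have vN: "v \<in> \<Union>N"
      proof (rule ccontr)
        assume "v \<notin> \<Union>N"
        then show False using IHk N w(2) \<open>w \<noteq> v\<close> by blast
      qed
      have mM: "matching E M" and mN: "matching E N" using M N unfolding maxm_def by auto
      have cMN: "card M = card N" using M N unfolding maxm_def by (simp add: le_antisym)
      have finV: "finite V" using sg unfolding simple_graph_def by blast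
      define A where "A = V - \<Union>M"
      define B where "B = V - \<Union>N"
      have cA: "card A = card V - 2 * card M" unfolding A_def
        using matching_card_Union[OF sg mM] finV by (simp add: card_Diff_subset finite_subset)
      have cB: "card B = card V - 2 * card N" unfolding B_def
        using matching_card_Union[OF sg mN] finV by (simp add: card_Diff_subset finite_subset)
      have finA: "finite A" "finite B" using finV A_def B_def by auto
      have uvA: "{u,v} \<subseteq> A - B" using uV vV uv(3,4) uN vN unfolding A_def B_def by blast
      have "card (A - B) \<ge> 2"
        using card_mono[OF _ uvA] finA uv(2) by simp
      moreover have "card (A - B) = card (B - A)"
        using cA cB cMN card_Diff_subset_Int finA by (metis Int_commute finite_Int)
      ultimately have "card (B - A) \<ge> 2" by simp
      then obtain z where z: "z \<in> B - A" "z \<noteq> w" using card_ge2_other[of "B - A" w] by blast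
      then have zM: "z \<in> \<Union>M" and zN: "z \<notin> \<Union>N" unfolding A_def B_def by auto
      then obtain e where e: "e \<in> M" "z \<in> e" by blast
      have eE: "e \<in> E" "card e = 2" using e mM sg unfolding matching_def simple_graph_def by auto
      obtain y where y: "e = {z, y}" "y \<noteq> z" using card2_obtain[OF eE(2) e(2)] by blast
      have yN: "y \<in> \<Union>N"
      proof (rule ccontr)
        assume "y \<notin> \<Union>N"
        then have "e \<inter> \<Union>N = {}" using y zN by auto
        then show False using maxm_insert[OF sg N(1) eE(1)] by blast
      qed
      then obtain f where f: "f \<in> N" "y \<in> f" by blast
      have "f \<noteq> e" using f zN e by blast
      have eN: "e \<notin> N" using zN e by blast
      have fM: "f \<notin> M"
      proof
        assume "f \<in> M"
        then have "e \<inter> f = {}" using mM e \<open>f \<noteq> e\<close> unfolding matching_def disjoint_def by blast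
        then show False using y f by blast
      qed
      define N' where "N' = insert e (N - {f})"
      have finN: "finite N" using matching_card_Union[OF sg mN] by blast
      have mN': "matching E N'"
        unfolding matching_def N'_def
      proof
        show "insert e (N - {f}) \<subseteq> E" using eE mN unfolding matching_def by blast
        have dN: "disjoint (N - {f})" using mN unfolding matching_def by (meson Diff_subset pairwise_subset)
        have "\<forall>g\<in>N - {f}. e \<inter> g = {}"
        proof
          fix g assume g: "g \<in> N - {f}"
          have "z \<notin> g" using zN g by blast
          moreover have "y \<notin> g" using mN g f unfolding matching_def disjoint_def by blast
          ultimately show "e \<inter> g = {}" using y by blast
        qed
        then show "disjoint (insert e (N - {f}))" using dN
          by (auto simp: pairwise_insert disjnt_def)
      qed
      have "card N' = card N" unfolding N'_def using eN f finN
        by (simp add: card.insert_remove) (metis One_nat_def Suc_pred card_gt_0_iff empty_iff)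
      then have "maxm E N'" using mN' N unfolding maxm_def by simp
      moreover have "w \<notin> \<Union>N'" unfolding N'_def using N(2) z(2) yN y by auto
      ultimately have "N' \<in> S" unfolding S_def by blast
      then have le: "card (M \<inter> N') \<le> card (M \<inter> N)" using Nmax by blast
      have "M \<inter> N' = insert e (M \<inter> N)" unfolding N'_def using e fM by auto
      moreover have "finite (M \<inter> N)" using finN by simp
      ultimately have "card (M \<inter> N') = Suc (card (M \<inter> N))" using eN by simp
      then show False using le by simp
    qed
  qed
qed



lemma caseB_comp:
  assumes sg: "simple_graph V E" and caseB: "\<forall>w\<in>V. \<exists>N. maxm E N \<and> w \<notin> \<Union>N"
    and M: "maxm E M" and C: "C \<in> components_minus V E {}"
  shows "card C div 2 \<le> card {e\<in>M. e \<subseteq> C}"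
proof -
  have finV: "finite V" using sg unfolding simple_graph_def by blast
  have mM: "matching E M" using M unfolding maxm_def by blast
  have CV: "C \<subseteq> V" using comp_sub[OF C] by blast
  have finC: "finite C" using CV finV finite_subset by blast
  have finM: "finite M" using matching_card_Union[OF sg mM] by blast
  let ?M = "{e\<in>M. e \<subseteq> C}"
  have le1: "card (C - \<Union>M) \<le> 1"
  proof -
    have fin: "finite (C - \<Union>M)" using finC by simp
    have "\<forall>a\<in>C - \<Union>M. \<forall>b\<in>C - \<Union>M. a = b"
    proof (intro ballI, rule ccontr)
      fix a b assume ab: "a \<in> C - \<Union>M" "b \<in> C - \<Union>M" "a \<noteq> b"
      then have "(a,b) \<in> (adj_outside V E {})\<^sup>*" using comp_conn[OF C] by blast
      then obtain k where "(a,b) \<in> (adj_outside V E {}) ^^ k" using rtrancl_power by blast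
      then show False using no_two_unmatched[OF sg caseB, of k] M ab by blast
    qed
    then show ?thesis using card_le_Suc0_iff_eq[OF fin] by simp
  qed
  have sub: "C \<subseteq> \<Union>?M \<union> (C - \<Union>M)"
  proof
    fix z assume z: "z \<in> C"
    show "z \<in> \<Union>?M \<union> (C - \<Union>M)"
    proof (cases "z \<in> \<Union>M")
      case True
      then obtain e where e: "e \<in> M" "z \<in> e" by blast
      then have "e \<in> E" "e \<subseteq> V" "card e = 2" using mM sg unfolding matching_def simple_graph_def by auto
      then obtain C' where C': "C' \<in> components_minus V E {}" "e \<subseteq> C'" using edge_comp[of e E V "{}"] by auto
      then have "C' = C" using comp_eq[OF C' (1) C] e z by blast
      then show ?thesis using e C' by blast
    qed (use z in blast)
  qed
  have c2: "card (\<Union>?M) = 2 * card ?M"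
    using matching_card_Union(1)[OF sg, of ?M] mM unfolding matching_def
    by (metis (no_types, lifting) mem_Collect_eq pairwise_subset subset_iff)
  have "\<Union>?M \<subseteq> V" using matching_card_Union(2)[OF sg mM] by blast
  then have "finite (\<Union>?M)" using finV finite_subset by blast
  then have "card C \<le> 2 * card ?M + 1"
    using card_mono[OF _ sub] card_Un_le[of "\<Union>?M" "C - \<Union>M"] le1 finC c2 by simp
  then show ?thesis by simp
qed

lemma tutte_berge:
  assumes "simple_graph V E" "maxm E M"
  shows "\<exists>X\<subseteq>V. card X + (\<Sum>C\<in>components_minus V E X. card C div 2) \<le> card M"
  using assms
proof (induction "card V" arbitrary: V E M rule: less_induct)
  case less
  have finV: "finite V" using less.prems unfolding simple_graph_def by blast
  show ?case
  proof (cases "\<exists>u\<in>V. \<forall>N. maxm E N \<longrightarrow> u \<in> \<Union>N")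
    case True
    then obtain u where u: "u \<in> V" "\<forall>N. maxm E N \<longrightarrow> u \<in> \<Union>N" by blast
    define V' where "V' = V - {u}"
    define E' where "E' = {e\<in>E. u \<notin> e}"
    have sg': "simple_graph V' E'" using less.prems(1) unfolding simple_graph_def V'_def E'_def by auto
    have "card V > 0" using u finV card_gt_0_iff by blast
    then have cV: "card V' < card V" unfolding V'_def using u finV by simp
    obtain M' where M': "maxm E' M'" using maxm_exists[OF simple_finE[OF sg']] by blast
    obtain X' where X': "X' \<subseteq> V'" "card X' + (\<Sum>C\<in>components_minus V' E' X'. card C div 2) \<le> card M'"
      using less.hyps[OF cV sg' M'] by blast
    have mM': "matching E M'" using M' unfolding maxm_def matching_def E'_def by auto
    have "card M' \<le> card M" using mM' less.prems(2) unfolding maxm_def by blast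
    moreover have "card M' \<noteq> card M"
    proof
      assume "card M' = card M"
      then have "maxm E M'" using mM' less.prems(2) unfolding maxm_def by simp
      then have "u \<in> \<Union>M'" using u by blast
      then show False using M' unfolding maxm_def matching_def E'_def by auto
    qed
    ultimately have lt: "card M' < card M" by simp
    have adj: "adj_outside V' E' X' = adj_outside V E (insert u X')"
      unfolding adj_outside_def V'_def E'_def by auto
    have "V' - X' = V - insert u X'" unfolding V'_def by auto
    then have comps: "components_minus V' E' X' = components_minus V E (insert u X')"
      unfolding components_minus_def using adj by simp
    have "finite X'" using X'(1) finV V'_def finite_subset by blast
    moreover have "u \<notin> X'" using X'(1) V'_def by blast
    ultimately have "card (insert u X') = Suc (card X')" by simp
    then have "card (insert u X') + (\<Sum>C\<in>components_minus V E (insert u X'). card C div 2) \<le> card M"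
      using X'(2) lt comps by simp
    moreover have "insert u X' \<subseteq> V" using u X'(1) V'_def by blast
    ultimately show ?thesis by blast
  next
    case False
    then have caseB: "\<forall>w\<in>V. \<exists>N. maxm E N \<and> w \<notin> \<Union>N" by blast
    have mM: "matching E M" using less.prems(2) unfolding maxm_def by blast
    have "(\<Sum>C\<in>components_minus V E {}. card C div 2) \<le> (\<Sum>C\<in>components_minus V E {}. card {e\<in>M. e \<subseteq> C})"
      using caseB_comp[OF less.prems(1) caseB less.prems(2)] by (intro sum_mono) blast
    also have "\<dots> = card {e\<in>M. e \<inter> {} = {}}"
      using comps_card_sum[OF less.prems(1), of M "{}"] mM unfolding matching_def by simp
    finally show ?thesis by auto
  qed
qed



lemma binom_bound:
  assumes "l \<ge> 1" shows "d \<le> (l - 1) + (d choose l)"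
proof (induction d)
  case 0 then show ?case by simp
next
  case (Suc d)
  show ?case
  proof (cases "Suc d \<le> l - 1")
    case True then show ?thesis by simp
  next
    case False
    then have "d \<ge> l - 1" by simp
    then have "(d choose (l - 1)) \<ge> 1" by (simp add: Suc_leI)
    moreover have "Suc d choose l = (d choose l) + (d choose (l - 1))"
    proof -
      obtain l' where "l = Suc l'" using assms by (cases l) auto
      then show ?thesis by simp
    qed
    ultimately show ?thesis using Suc by simp
  qed
qed

lemma card_filter_sum: "finite A \<Longrightarrow> card {x\<in>A. P x} = (\<Sum>x\<in>A. if P x then 1 else 0)"
  by (simp add: sum.inter_filter[symmetric])

lemma sum_choose_bound:
  assumes sg: "simple_graph V E" and nk: "\<not> has_Klt l t V E" and XV: "X \<subseteq> V" and t1: "t \<ge> 1"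
  shows "(\<Sum>v\<in>V. card {a\<in>X. {a,v} \<in> E} choose l) \<le> (t - 1) * (card X choose l)"
proof -
  have finV: "finite V" using sg unfolding simple_graph_def by blast
  have finX: "finite X" using XV finV finite_subset by blast
  define P where "P = {S. S \<subseteq> X \<and> card S = l}"
  have finP: "finite P" unfolding P_def using finX by simp
  have cP: "card P = card X choose l" unfolding P_def using n_subsets[OF finX] .
  have "(\<Sum>v\<in>V. card {a\<in>X. {a,v} \<in> E} choose l) = (\<Sum>v\<in>V. card {S\<in>P. S \<subseteq> {a\<in>X. {a,v} \<in> E}})"
  proof (rule sum.cong)
    fix v assume "v \<in> V"
    have "{S\<in>P. S \<subseteq> {a\<in>X. {a,v} \<in> E}} = {S. S \<subseteq> {a\<in>X. {a,v} \<in> E} \<and> card S = l}"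
      unfolding P_def by auto
    then show "card {a\<in>X. {a,v} \<in> E} choose l = card {S\<in>P. S \<subseteq> {a\<in>X. {a,v} \<in> E}}"
      using n_subsets[of "{a\<in>X. {a,v} \<in> E}" l] finX by simp
  qed simp
  also have "\<dots> = (\<Sum>v\<in>V. \<Sum>S\<in>P. if S \<subseteq> {a\<in>X. {a,v} \<in> E} then 1 else 0)"
    using card_filter_sum[OF finP] by simp
  also have "\<dots> = (\<Sum>S\<in>P. \<Sum>v\<in>V. if S \<subseteq> {a\<in>X. {a,v} \<in> E} then 1 else 0)"
    by (rule sum.swap)
  also have "\<dots> = (\<Sum>S\<in>P. card {v\<in>V. S \<subseteq> {a\<in>X. {a,v} \<in> E}})"
    using card_filter_sum[OF finV] by simp
  also have "\<dots> \<le> (\<Sum>S\<in>P. t - 1)"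
  proof (rule sum_mono)
    fix S assume S: "S \<in> P"
    show "card {v\<in>V. S \<subseteq> {a\<in>X. {a,v} \<in> E}} \<le> t - 1"
    proof (rule ccontr)
      assume "\<not> ?thesis"
      then have "card {v\<in>V. S \<subseteq> {a\<in>X. {a,v} \<in> E}} \<ge> t" by simp
      then obtain B where B: "B \<subseteq> {v\<in>V. S \<subseteq> {a\<in>X. {a,v} \<in> E}}" "card B = t"
        by (rule obtain_subset_with_card_n)
      have BV: "B \<subseteq> V" using B(1) by blast
      have SB: "S \<inter> B = {}"
      proof (rule ccontr)
        assume "S \<inter> B \<noteq> {}"
        then obtain v where "v \<in> S" "v \<in> B" by blast
        then have "{v,v} \<in> E" using B by blast
        then show False using sg unfolding simple_graph_def by fastforce
      qed
      have SV: "S \<subseteq> V" "card S = l" using S XV unfolding P_def by auto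
      have ed: "\<forall>a\<in>S. \<forall>b\<in>B. {a,b} \<in> E" using B(1) by blast
      have "has_Klt l t V E" unfolding has_Klt_def
        by (rule exI[of _ S], rule exI[of _ B]) (use SV BV SB ed B(2) in simp)
      then show False using nk by blast
    qed
  qed
  also have "\<dots> = (t - 1) * (card X choose l)" using cP by simp
  finally show ?thesis .
qed



lemma deg_alt:
  assumes sg: "simple_graph V E"
  shows "card {a\<in>X. {a,v} \<in> E} = card {e\<in>E. v \<in> e \<and> e - {v} \<subseteq> X}"
proof -
  have nv: "\<And>a. {a,v} \<in> E \<Longrightarrow> a \<noteq> v"
  proof
    fix a assume "{a,v} \<in> E" "a = v"
    then have "card {v} = 2" using sg unfolding simple_graph_def by fastforce
    then show False by simp
  qed
  have inj: "inj_on (\<lambda>a. {a,v}) {a\<in>X. {a,v} \<in> E}"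
  proof (rule inj_onI)
    fix a b assume "a \<in> {a\<in>X. {a,v} \<in> E}" "b \<in> {a\<in>X. {a,v} \<in> E}" "{a,v} = {b,v}"
    then show "a = b" using nv by (metis doubleton_eq_iff mem_Collect_eq)
  qed
  have img: "(\<lambda>a. {a,v}) ` {a\<in>X. {a,v} \<in> E} = {e\<in>E. v \<in> e \<and> e - {v} \<subseteq> X}"
  proof
    show "(\<lambda>a. {a,v}) ` {a\<in>X. {a,v} \<in> E} \<subseteq> {e\<in>E. v \<in> e \<and> e - {v} \<subseteq> X}"
      using nv by auto
    show "{e\<in>E. v \<in> e \<and> e - {v} \<subseteq> X} \<subseteq> (\<lambda>a. {a,v}) ` {a\<in>X. {a,v} \<in> E}"
    proof
      fix e assume e: "e \<in> {e\<in>E. v \<in> e \<and> e - {v} \<subseteq> X}"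
      then have c2: "card e = 2" using sg unfolding simple_graph_def by auto
      have ve: "v \<in> e" using e by blast
      obtain y where y: "e = {v, y}" "y \<noteq> v" using card2_obtain[OF c2 ve] by blast
      then have "y \<in> X" using e by auto
      moreover have "e = {y, v}" using y by auto
      ultimately show "e \<in> (\<lambda>a. {a,v}) ` {a\<in>X. {a,v} \<in> E}" using e by auto
    qed
  qed
  show ?thesis using card_image[OF inj] img by simp
qed

lemma sum_swap_card:
  assumes "finite Y" "finite E"
  shows "(\<Sum>v\<in>Y. card {e\<in>E. Q v e}) = (\<Sum>e\<in>E. card {v\<in>Y. Q v e})"
proof -
  have "(\<Sum>v\<in>Y. card {e\<in>E. Q v e}) = (\<Sum>v\<in>Y. \<Sum>e\<in>E. if Q v e then 1 else 0)"
    using card_filter_sum[OF assms(2)] by simp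
  also have "\<dots> = (\<Sum>e\<in>E. \<Sum>v\<in>Y. if Q v e then 1 else 0)" by (rule sum.swap)
  also have "\<dots> = (\<Sum>e\<in>E. card {v\<in>Y. Q v e})" using card_filter_sum[OF assms(1)] by simp
  finally show ?thesis .
qed

lemma edge_count:
  assumes "p \<noteq> q"
  shows "card {v\<in>{p,q}. {p,q} - {v} \<subseteq> X} + card {v\<in>{p,q}. v \<notin> X \<and> {p,q} - {v} \<subseteq> X}
         = (if {p,q} \<inter> X = {} then 0 else 2)"
proof (cases "p \<in> X"; cases "q \<in> X")
  assume "p \<in> X" "q \<in> X"
  then have "{v\<in>{p,q}. {p,q} - {v} \<subseteq> X} = {p,q}" "{v\<in>{p,q}. v \<notin> X \<and> {p,q} - {v} \<subseteq> X} = {}"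
    by auto
  then show ?thesis using assms \<open>p \<in> X\<close> by simp
next
  assume "p \<in> X" "q \<notin> X"
  then have "{v\<in>{p,q}. {p,q} - {v} \<subseteq> X} = {q}" "{v\<in>{p,q}. v \<notin> X \<and> {p,q} - {v} \<subseteq> X} = {q}"
    using assms by auto
  then show ?thesis using assms \<open>p \<in> X\<close> by simp
next
  assume "p \<notin> X" "q \<in> X"
  then have "{v\<in>{p,q}. {p,q} - {v} \<subseteq> X} = {p}" "{v\<in>{p,q}. v \<notin> X \<and> {p,q} - {v} \<subseteq> X} = {p}"
    using assms by auto
  then show ?thesis using assms \<open>q \<in> X\<close> by simp
next
  assume "p \<notin> X" "q \<notin> X"
  then have "{v\<in>{p,q}. {p,q} - {v} \<subseteq> X} = {}" "{v\<in>{p,q}. v \<notin> X \<and> {p,q} - {v} \<subseteq> X} = {}"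
    using assms by auto
  moreover have "{p,q} \<inter> X = {}" using \<open>p \<notin> X\<close> \<open>q \<notin> X\<close> by auto
  ultimately show ?thesis by simp
qed

lemma handshake:
  assumes sg: "simple_graph V E" and XV: "X \<subseteq> V"
  shows "(\<Sum>v\<in>V. card {a\<in>X. {a,v} \<in> E}) + (\<Sum>v\<in>V - X. card {a\<in>X. {a,v} \<in> E})
         = 2 * card {e\<in>E. e \<inter> X \<noteq> {}}"
proof -
  have finV: "finite V" using sg unfolding simple_graph_def by blast
  have finE: "finite E" using simple_finE[OF sg] .
  have "(\<Sum>v\<in>V. card {a\<in>X. {a,v} \<in> E}) = (\<Sum>e\<in>E. card {v\<in>V. v \<in> e \<and> e - {v} \<subseteq> X})"
    using deg_alt[OF sg] sum_swap_card[OF finV finE, of "\<lambda>v e. v \<in> e \<and> e - {v} \<subseteq> X"] by simp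
  moreover have "(\<Sum>v\<in>V - X. card {a\<in>X. {a,v} \<in> E}) = (\<Sum>e\<in>E. card {v\<in>V - X. v \<in> e \<and> e - {v} \<subseteq> X})"
    using deg_alt[OF sg] sum_swap_card[of "V - X" E "\<lambda>v e. v \<in> e \<and> e - {v} \<subseteq> X"] finV finE by simp
  ultimately have "(\<Sum>v\<in>V. card {a\<in>X. {a,v} \<in> E}) + (\<Sum>v\<in>V - X. card {a\<in>X. {a,v} \<in> E})
      = (\<Sum>e\<in>E. card {v\<in>V. v \<in> e \<and> e - {v} \<subseteq> X} + card {v\<in>V - X. v \<in> e \<and> e - {v} \<subseteq> X})"
    by (simp add: sum.distrib)
  also have "\<dots> = (\<Sum>e\<in>E. if e \<inter> X = {} then 0 else 2)"
  proof (rule sum.cong)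
    fix e assume e: "e \<in> E"
    then have "card e = 2" "e \<subseteq> V" using sg unfolding simple_graph_def by auto
    then obtain p q where pq: "e = {p,q}" "p \<noteq> q" "p \<in> V" "q \<in> V"
      using card_2_iff[THEN iffD1] by (metis insert_subset)
    have "{v\<in>V. v \<in> e \<and> e - {v} \<subseteq> X} = {v\<in>{p,q}. {p,q} - {v} \<subseteq> X}" using pq by auto
    moreover have "{v\<in>V - X. v \<in> e \<and> e - {v} \<subseteq> X} = {v\<in>{p,q}. v \<notin> X \<and> {p,q} - {v} \<subseteq> X}"
      using pq by auto
    ultimately show "card {v\<in>V. v \<in> e \<and> e - {v} \<subseteq> X} + card {v\<in>V - X. v \<in> e \<and> e - {v} \<subseteq> X}
        = (if e \<inter> X = {} then 0 else 2)" using edge_count[OF pq(2)] pq(1) by simp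
  qed simp
  also have "\<dots> = (\<Sum>e\<in>E. if e \<inter> X \<noteq> {} then 2 else 0)" by (rule sum.cong) auto
  also have "\<dots> = (\<Sum>e\<in>{e\<in>E. e \<inter> X \<noteq> {}}. 2)"
    using sum.inter_filter[OF finE, of "\<lambda>_. 2::nat" "\<lambda>e. e \<inter> X \<noteq> {}"] by simp
  also have "\<dots> = 2 * card {e\<in>E. e \<inter> X \<noteq> {}}" by simp
  finally show ?thesis .
qed



theorem lemma3p4:
  fixes l t s x n :: nat and V :: "'a set" and E :: "'a set set"
  assumes "n \<ge> 2 * s + 1" and "t \<ge> l" and "2 \<le> l" and "l \<le> x" and "x \<le> s"
    and "simple_graph V E" and "card V = n"
    and "\<not> has_Klt l t V E" and "\<not> has_matching (s + 1) E"
    and "x_param s V E = x"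
  shows "int (card E) \<le> int ((t - 1) * (x choose l)) + int ((l - 1) * n)
           - ceiling (real (x * (l - 1)) / 2) + int (ex_Klt (2 * (s - x) + 1) l t)"
proof -
  have sg: "simple_graph V E" using assms(6) .
  have l1: "l \<ge> 1" "t \<ge> 1" "l \<ge> 2" "t \<ge> 2" using assms(2,3) by auto
  have finV: "finite V" using sg unfolding simple_graph_def by blast
  have finE: "finite E" using simple_finE[OF sg] .
  obtain M where M: "maxm E M" using maxm_exists[OF finE] by blast
  have mM: "matching E M" using M unfolding maxm_def by blast
  have cM: "card M \<le> s"
  proof (rule ccontr)
    assume "\<not> card M \<le> s"
    then have "s + 1 \<le> card M" by simp
    then obtain M0 where M0: "M0 \<subseteq> M" "card M0 = s + 1" by (rule obtain_subset_with_card_n)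
    have "M0 \<subseteq> E" using M0(1) mM unfolding matching_def by blast
    moreover have "disjoint M0" using M0(1) mM unfolding matching_def by (meson pairwise_subset)
    ultimately have "has_matching (s + 1) E" unfolding has_matching_def using M0(2) by blast
    then show False using assms(9) by blast
  qed
  obtain X0 where X0: "X0 \<subseteq> V" "card X0 + (\<Sum>C\<in>components_minus V E X0. card C div 2) \<le> card M"
    using tutte_berge[OF sg M] by blast
  define Sx where "Sx = {card X | X. admissible s V E X}"
  have "admissible s V E X0" unfolding admissible_def using X0 cM by simp
  then have Sne: "Sx \<noteq> {}" unfolding Sx_def by blast
  have "Sx \<subseteq> {..card V}" unfolding Sx_def admissible_def using card_mono[OF finV] by auto
  then have finSx: "finite Sx" using finite_subset by blast
  have "Max Sx \<in> Sx" using Max_in[OF finSx Sne] .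
  moreover have "Max Sx = x" using assms(10) unfolding x_param_def Sx_def by simp
  ultimately obtain X where X: "admissible s V E X" "card X = x" unfolding Sx_def by auto
  have XV: "X \<subseteq> V" and adm: "card X + (\<Sum>C\<in>components_minus V E X. card C div 2) \<le> s"
    using X(1) unfolding admissible_def by auto
  define E1 where "E1 = {e\<in>E. e \<inter> X \<noteq> {}}"
  define E2 where "E2 = {e\<in>E. e \<inter> X = {}}"
  have cE: "card E = card E1 + card E2"
  proof -
    have "E = E1 \<union> E2" "E1 \<inter> E2 = {}" unfolding E1_def E2_def by auto
    moreover have "finite E1" "finite E2" unfolding E1_def E2_def using finE by auto
    ultimately show ?thesis using card_Un_disjoint by metis
  qed
  define K where "K = (\<Sum>C\<in>components_minus V E X. card C div 2)"
  have K: "K \<le> s - x" using adm X(2) unfolding K_def by simp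
  have finC: "finite (components_minus V E X)" using comps_finite[OF finV] .
  have "card E2 = (\<Sum>C\<in>components_minus V E X. card {e\<in>E. e \<subseteq> C})"
    unfolding E2_def using comps_card_sum[OF sg, of E X] by simp
  also have "\<dots> \<le> (\<Sum>C\<in>components_minus V E X. ex_Klt (2 * (card C div 2) + 1) l t)"
  proof (rule sum_mono)
    fix C assume C: "C \<in> components_minus V E X"
    have CV: "C \<subseteq> V" using comp_sub[OF C] by blast
    have sgC: "simple_graph C {e\<in>E. e \<subseteq> C}"
      using sg CV finV finite_subset unfolding simple_graph_def by auto
    have nkC: "\<not> has_Klt l t C {e\<in>E. e \<subseteq> C}"
    proof
      assume "has_Klt l t C {e\<in>E. e \<subseteq> C}"
      then have "has_Klt l t V E" using has_Klt_mono[of l t C _ V E] CV by blast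
      then show False using assms(8) by blast
    qed
    have "card C \<le> 2 * (card C div 2) + 1" by simp
    then show "card {e\<in>E. e \<subseteq> C} \<le> ex_Klt (2 * (card C div 2) + 1) l t"
      using ex_bound[OF sgC nkC _ l1(1,2)] by blast
  qed
  also have "\<dots> \<le> ex_Klt (2 * K + 1) l t"
    unfolding K_def using ex_sum[OF finC l1(3,4), of "\<lambda>C. card C div 2"] by simp
  also have "\<dots> \<le> ex_Klt (2 * (s - x) + 1) l t" using ex_mono[OF _ l1(1,2)] K by simp
  finally have E2b: "card E2 \<le> ex_Klt (2 * (s - x) + 1) l t" .
  define d where "d = (\<lambda>v. card {a\<in>X. {a,v} \<in> E})"
  define c where "c = (\<lambda>v. d v choose l)"
  define T where "T = (t - 1) * (x choose l)"
  have H: "sum d V + sum d (V - X) = 2 * card E1"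
    unfolding d_def E1_def using handshake[OF sg XV] .
  have SC: "sum c V \<le> T"
    unfolding c_def d_def T_def using sum_choose_bound[OF sg assms(8) XV l1(2)] X(2) by simp
  have splitd: "sum d V = sum d (V - X) + sum d X" using sum.subset_diff[OF XV finV] .
  have splitc: "sum c V = sum c (V - X) + sum c X" using sum.subset_diff[OF XV finV] .
  have bO: "sum d (V - X) \<le> (l - 1) * card (V - X) + sum c (V - X)"
  proof -
    have "sum d (V - X) \<le> (\<Sum>v\<in>V - X. (l - 1) + c v)"
      unfolding c_def using binom_bound[OF l1(1)] by (intro sum_mono) blast
    then show ?thesis by (simp add: sum.distrib mult.commute)
  qed
  have bI: "sum d X \<le> (l - 1) * card X + sum c X"
  proof -
    have "sum d X \<le> (\<Sum>v\<in>X. (l - 1) + c v)"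
      unfolding c_def using binom_bound[OF l1(1)] by (intro sum_mono) blast
    then show ?thesis by (simp add: sum.distrib mult.commute)
  qed
  have xn: "x \<le> n" using assms(1,5) by simp
  have cVX: "card (V - X) = n - x" using card_Diff_subset[OF _ XV] finV XV X(2) assms(7)
    by (metis finite_subset)
  have "2 * card E1 \<le> (l - 1) * x + 2 * ((l - 1) * (n - x)) + 2 * T"
  proof -
    have bO': "sum d (V - X) \<le> (l - 1) * (n - x) + sum c (V - X)" using bO cVX by simp
    have bI': "sum d X \<le> (l - 1) * x + sum c X" using bI X(2) by simp
    show ?thesis using H splitd splitc bO' bI' SC by linarith
  qed
  moreover have "(l - 1) * (n - x) + (l - 1) * x = (l - 1) * n"
    using xn by (metis add_mult_distrib2 le_add_diff_inverse2)
  ultimately have key: "2 * card E1 + x * (l - 1) \<le> 2 * ((l - 1) * n) + 2 * T"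
    by (simp add: mult.commute)
  have "real (x * (l - 1)) / 2 \<le> real T + real ((l - 1) * n) - real (card E1)"
  proof -
    have "real (2 * card E1 + x * (l - 1)) \<le> real (2 * ((l - 1) * n) + 2 * T)"
      using key by (simp only: of_nat_le_iff)
    then show ?thesis by simp
  qed
  then have "ceiling (real (x * (l - 1)) / 2) \<le> int T + int ((l - 1) * n) - int (card E1)"
    by (simp add: ceiling_le_iff)
  then show ?thesis using cE E2b unfolding T_def by linarith
qed


end
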